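(* Let $(H,R)$ be a quasitriangular Hopf algebra and $\pi:H\to K$ a surjective Hopf algebra map. Then, identifying $\underline{H}$ with $H$ as vector spaces, $$\{h\in H\mid (\mathrm{id}\otimes\pi)\circ\underline{\Delta}(h)=h\otimes 1\}=H^{co\pi}:=\{h\in H\mid (\mathrm{id}\otimes\pi)\circ\Delta(h)=h\otimes 1\}.$$
   Context: $(H,R)$ quasitriangular means $R=\sum_iR_i\otimes R^i\in H\otimes H$ is invertible with $(\Delta\otimes\mathrm{id})(R)=R_{13}R_{23}$, $(\mathrm{id}\otimes\Delta)(R)=R_{13}R_{12}$, $\tau\Delta(h)=R\Delta(h)R^{-1}$. Sweedler notation $\Delta(h)=h_{(1)}\otimes h_{(2)}$; $\mathrm{ad}_h(a)=h_{(1)}aS(h_{(2)})$. The transmuted comultiplication on $H$ is $\underline{\Delta}(a)=\sum_i a_{(1)}S(R^i)\otimes\mathrm{ad}_{R_i}(a_{(2)})$. *)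

theory Defs
  imports Main "HOL-Library.Poly_Mapping"
begin

text \<open>
  A vector space over a field k is modelled (up to isomorphism) by its
  basis: the vector space with basis indexed by the type 'a is the type of finitely
  supported functions  'a =>0 'k.  Every vector space has a basis, so this is
  no loss of generality.  The tensor product of the spaces with bases 'a and 'b is the
  space with basis 'a \<times> 'b.  A linear map V \<rightarrow> W is given by its values on the
  basis of V, i.e. by a function  'a \<Rightarrow> ('b =>0 'k), and is applied via its
  linear extension lin_ext.
\<close>

definition smult :: "'k::field \<Rightarrow> ('a \<Rightarrow>\<^sub>0 'k) \<Rightarrow> ('a \<Rightarrow>\<^sub>0 'k)" where
  "smult c v = Poly_Mapping.map (\<lambda>x. c * x) v"

definition bvec :: "'a \<Rightarrow> ('a \<Rightarrow>\<^sub>0 'k::field)" where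
  "bvec a = Poly_Mapping.single a 1"

definition lin_ext :: "('a \<Rightarrow> ('b \<Rightarrow>\<^sub>0 'k::field)) \<Rightarrow> ('a \<Rightarrow>\<^sub>0 'k) \<Rightarrow> ('b \<Rightarrow>\<^sub>0 'k)" where
  "lin_ext f v = (\<Sum>a\<in>Poly_Mapping.keys v. smult (Poly_Mapping.lookup v a) (f a))"

definition lin_form :: "('a \<Rightarrow> 'k::field) \<Rightarrow> ('a \<Rightarrow>\<^sub>0 'k) \<Rightarrow> 'k" where
  "lin_form f v = (\<Sum>a\<in>Poly_Mapping.keys v. Poly_Mapping.lookup v a * f a)"

definition tensor :: "('a \<Rightarrow>\<^sub>0 'k::field) \<Rightarrow> ('b \<Rightarrow>\<^sub>0 'k) \<Rightarrow> ('a \<times> 'b \<Rightarrow>\<^sub>0 'k)" where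
  "tensor v w = (\<Sum>a\<in>Poly_Mapping.keys v. \<Sum>b\<in>Poly_Mapping.keys w.
                   Poly_Mapping.single (a, b) (Poly_Mapping.lookup v a * Poly_Mapping.lookup w b))"

definition tmap :: "('a \<Rightarrow> ('b \<Rightarrow>\<^sub>0 'k::field)) \<Rightarrow> ('c \<Rightarrow> ('d \<Rightarrow>\<^sub>0 'k)) \<Rightarrow> ('a \<times> 'c \<Rightarrow> ('b \<times> 'd \<Rightarrow>\<^sub>0 'k))" where
  "tmap f g = (\<lambda>(a, c). tensor (f a) (g c))"

definition idmap :: "'a \<Rightarrow> ('a \<Rightarrow>\<^sub>0 'k::field)" where
  "idmap = bvec"

definition flip :: "('a \<times> 'b \<Rightarrow>\<^sub>0 'k::field) \<Rightarrow> ('b \<times> 'a \<Rightarrow>\<^sub>0 'k)" where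
  "flip = lin_ext (\<lambda>(a, b). bvec (b, a))"

definition reassoc :: "(('a \<times> 'b) \<times> 'c \<Rightarrow>\<^sub>0 'k::field) \<Rightarrow> ('a \<times> 'b \<times> 'c \<Rightarrow>\<^sub>0 'k)" where
  "reassoc = lin_ext (\<lambda>((a, b), c). bvec (a, b, c))"

definition mul :: "('a \<times> 'a \<Rightarrow> ('a \<Rightarrow>\<^sub>0 'k::field)) \<Rightarrow> ('a \<Rightarrow>\<^sub>0 'k) \<Rightarrow> ('a \<Rightarrow>\<^sub>0 'k) \<Rightarrow> ('a \<Rightarrow>\<^sub>0 'k)" where
  "mul m x y = lin_ext m (tensor x y)"

definition tmult :: "('a \<times> 'a \<Rightarrow> ('a \<Rightarrow>\<^sub>0 'k::field)) \<Rightarrow> ('b \<times> 'b \<Rightarrow> ('b \<Rightarrow>\<^sub>0 'k))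
                      \<Rightarrow> (('a \<times> 'b) \<times> ('a \<times> 'b) \<Rightarrow> ('a \<times> 'b \<Rightarrow>\<^sub>0 'k))" where
  "tmult m1 m2 = (\<lambda>((a, b), (c, d)). tensor (m1 (a, c)) (m2 (b, d)))"

definition hopf_algebra ::
  "('a \<times> 'a \<Rightarrow> ('a \<Rightarrow>\<^sub>0 'k::field)) \<Rightarrow> ('a \<Rightarrow>\<^sub>0 'k) \<Rightarrow> ('a \<Rightarrow> ('a \<times> 'a \<Rightarrow>\<^sub>0 'k))
    \<Rightarrow> ('a \<Rightarrow> 'k) \<Rightarrow> ('a \<Rightarrow> ('a \<Rightarrow>\<^sub>0 'k)) \<Rightarrow> bool" where
  "hopf_algebra m u d e S \<longleftrightarrow>
     \<comment> \<open>associative unital algebra\<close>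
     (\<forall>x y z. mul m (mul m x y) z = mul m x (mul m y z)) \<and>
     (\<forall>x. mul m u x = x \<and> mul m x u = x) \<and>
     \<comment> \<open>coassociative counital coalgebra\<close>
     (\<forall>a. reassoc (lin_ext (tmap d idmap) (d a)) = lin_ext (tmap idmap d) (d a)) \<and>
     (\<forall>a. lin_ext (\<lambda>(x, y). smult (e x) (bvec y)) (d a) = bvec a) \<and>
     (\<forall>a. lin_ext (\<lambda>(x, y). smult (e y) (bvec x)) (d a) = bvec a) \<and>
     \<comment> \<open>comultiplication and counit are algebra maps\<close>
     (\<forall>x y. lin_ext d (mul m x y) = mul (tmult m m) (lin_ext d x) (lin_ext d y)) \<and>
     lin_ext d u = tensor u u \<and>
     (\<forall>x y. lin_form e (mul m x y) = lin_form e x * lin_form e y) \<and>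
     lin_form e u = 1 \<and>
     \<comment> \<open>antipode\<close>
     (\<forall>a. lin_ext (\<lambda>(x, y). mul m (S x) (bvec y)) (d a) = smult (e a) u) \<and>
     (\<forall>a. lin_ext (\<lambda>(x, y). mul m (bvec x) (S y)) (d a) = smult (e a) u)"

text \<open>Hopf algebra map (= bialgebra map) \<pi> : H \<rightarrow> K\<close>
definition hopf_map ::
  "('a \<times> 'a \<Rightarrow> ('a \<Rightarrow>\<^sub>0 'k::field)) \<Rightarrow> ('a \<Rightarrow>\<^sub>0 'k) \<Rightarrow> ('a \<Rightarrow> ('a \<times> 'a \<Rightarrow>\<^sub>0 'k)) \<Rightarrow> ('a \<Rightarrow> 'k)
   \<Rightarrow> ('c \<times> 'c \<Rightarrow> ('c \<Rightarrow>\<^sub>0 'k)) \<Rightarrow> ('c \<Rightarrow>\<^sub>0 'k) \<Rightarrow> ('c \<Rightarrow> ('c \<times> 'c \<Rightarrow>\<^sub>0 'k)) \<Rightarrow> ('c \<Rightarrow> 'k)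
   \<Rightarrow> ('a \<Rightarrow> ('c \<Rightarrow>\<^sub>0 'k)) \<Rightarrow> bool" where
  "hopf_map mH uH dH eH mK uK dK eK p \<longleftrightarrow>
     (\<forall>x y. lin_ext p (mul mH x y) = mul mK (lin_ext p x) (lin_ext p y)) \<and>
     lin_ext p uH = uK \<and>
     (\<forall>a. lin_ext dK (p a) = lin_ext (tmap p p) (dH a)) \<and>
     (\<forall>a. lin_form eK (p a) = eH a)"

definition leg12 :: "('a \<Rightarrow>\<^sub>0 'k::field) \<Rightarrow> ('a \<times> 'a \<Rightarrow>\<^sub>0 'k) \<Rightarrow> ('a \<times> 'a \<times> 'a \<Rightarrow>\<^sub>0 'k)" where
  "leg12 u R = lin_ext (\<lambda>(a, b). tensor (bvec a) (tensor (bvec b) u)) R"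
definition leg13 :: "('a \<Rightarrow>\<^sub>0 'k::field) \<Rightarrow> ('a \<times> 'a \<Rightarrow>\<^sub>0 'k) \<Rightarrow> ('a \<times> 'a \<times> 'a \<Rightarrow>\<^sub>0 'k)" where
  "leg13 u R = lin_ext (\<lambda>(a, b). tensor (bvec a) (tensor u (bvec b))) R"
definition leg23 :: "('a \<Rightarrow>\<^sub>0 'k::field) \<Rightarrow> ('a \<times> 'a \<Rightarrow>\<^sub>0 'k) \<Rightarrow> ('a \<times> 'a \<times> 'a \<Rightarrow>\<^sub>0 'k)" where
  "leg23 u R = tensor u R"

definition quasitriangular ::
  "('a \<times> 'a \<Rightarrow> ('a \<Rightarrow>\<^sub>0 'k::field)) \<Rightarrow> ('a \<Rightarrow>\<^sub>0 'k) \<Rightarrow> ('a \<Rightarrow> ('a \<times> 'a \<Rightarrow>\<^sub>0 'k))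
    \<Rightarrow> ('a \<Rightarrow> 'k) \<Rightarrow> ('a \<Rightarrow> ('a \<Rightarrow>\<^sub>0 'k)) \<Rightarrow> ('a \<times> 'a \<Rightarrow>\<^sub>0 'k) \<Rightarrow> bool" where
  "quasitriangular m u d e S R \<longleftrightarrow>
     hopf_algebra m u d e S \<and>
     (\<exists>Rinv. mul (tmult m m) R Rinv = tensor u u \<and> mul (tmult m m) Rinv R = tensor u u \<and>
        (\<forall>h. flip (lin_ext d h) = mul (tmult m m) (mul (tmult m m) R (lin_ext d h)) Rinv)) \<and>
     reassoc (lin_ext (tmap d idmap) R) = mul (tmult m (tmult m m)) (leg13 u R) (leg23 u R) \<and>
     lin_ext (tmap idmap d) R = mul (tmult m (tmult m m)) (leg13 u R) (leg12 u R)"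

definition ad ::
  "('a \<times> 'a \<Rightarrow> ('a \<Rightarrow>\<^sub>0 'k::field)) \<Rightarrow> ('a \<Rightarrow> ('a \<times> 'a \<Rightarrow>\<^sub>0 'k)) \<Rightarrow> ('a \<Rightarrow> ('a \<Rightarrow>\<^sub>0 'k))
    \<Rightarrow> ('a \<Rightarrow>\<^sub>0 'k) \<Rightarrow> ('a \<Rightarrow>\<^sub>0 'k) \<Rightarrow> ('a \<Rightarrow>\<^sub>0 'k)" where
  "ad m d S h a = lin_ext (\<lambda>(x, y). mul m (mul m (bvec x) a) (lin_ext S (bvec y))) (lin_ext d h)"

text \<open>transmuted comultiplication
  \<Delta>_(a) = \<Sum>_i a_(1) S(R^i) \<otimes> ad_{R_i}(a_(2)),  where R = \<Sum>_i R_i \<otimes> R^i\<close>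
definition transmuted_comult ::
  "('a \<times> 'a \<Rightarrow> ('a \<Rightarrow>\<^sub>0 'k::field)) \<Rightarrow> ('a \<Rightarrow> ('a \<times> 'a \<Rightarrow>\<^sub>0 'k)) \<Rightarrow> ('a \<Rightarrow> ('a \<Rightarrow>\<^sub>0 'k))
    \<Rightarrow> ('a \<times> 'a \<Rightarrow>\<^sub>0 'k) \<Rightarrow> ('a \<Rightarrow>\<^sub>0 'k) \<Rightarrow> ('a \<times> 'a \<Rightarrow>\<^sub>0 'k)" where
  "transmuted_comult m d S R a =
     lin_ext (\<lambda>(r1, r2).
        lin_ext (\<lambda>(x, y). tensor (mul m (bvec x) (lin_ext S (bvec r2))) (ad m d S (bvec r1) (bvec y)))
                (lin_ext d a)) R"

end

theory Submission
  imports Defs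
begin


lemma lookup_smult[simp]: "Poly_Mapping.lookup (smult c v) a = c * Poly_Mapping.lookup v a"
  unfolding smult_def by transfer (simp add: when_def)

lemma lookup_bvec: "Poly_Mapping.lookup (bvec a) b = (if a = b then 1 else 0)"
  unfolding bvec_def by (simp add: lookup_single)

lemma keys_bvec[simp]: "Poly_Mapping.keys (bvec a :: _ \<Rightarrow>\<^sub>0 'k::field) = {a}"
  unfolding bvec_def by simp

lemma lookup_lin_ext: "Poly_Mapping.lookup (lin_ext f v) b = (\<Sum>a\<in>Poly_Mapping.keys v. Poly_Mapping.lookup v a * Poly_Mapping.lookup (f a) b)"
  unfolding lin_ext_def by (simp add: lookup_sum)

lemma lookup_lin_ext_sup:
  assumes "finite A" "Poly_Mapping.keys v \<subseteq> A"
  shows "Poly_Mapping.lookup (lin_ext f v) b = (\<Sum>a\<in>A. Poly_Mapping.lookup v a * Poly_Mapping.lookup (f a) b)"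
  unfolding lookup_lin_ext
  by (rule sum.mono_neutral_left) (use assms in \<open>auto simp: in_keys_iff\<close>)

lemma lin_ext_add: "lin_ext f (v + w) = lin_ext f v + lin_ext f w"
proof (rule poly_mapping_eqI)
  fix b
  have f: "finite (Poly_Mapping.keys v \<union> Poly_Mapping.keys w)" by simp
  have 1: "Poly_Mapping.lookup (lin_ext f (v + w)) b = (\<Sum>a\<in>Poly_Mapping.keys v \<union> Poly_Mapping.keys w. Poly_Mapping.lookup (v + w) a * Poly_Mapping.lookup (f a) b)"
    by (rule lookup_lin_ext_sup[OF f]) (rule keys_add)
  have 2: "Poly_Mapping.lookup (lin_ext f v) b = (\<Sum>a\<in>Poly_Mapping.keys v \<union> Poly_Mapping.keys w. Poly_Mapping.lookup v a * Poly_Mapping.lookup (f a) b)"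
    by (rule lookup_lin_ext_sup[OF f]) auto
  have 3: "Poly_Mapping.lookup (lin_ext f w) b = (\<Sum>a\<in>Poly_Mapping.keys v \<union> Poly_Mapping.keys w. Poly_Mapping.lookup w a * Poly_Mapping.lookup (f a) b)"
    by (rule lookup_lin_ext_sup[OF f]) auto
  show "Poly_Mapping.lookup (lin_ext f (v + w)) b = Poly_Mapping.lookup (lin_ext f v + lin_ext f w) b"
    unfolding lookup_add 1 2 3 by (simp only: lookup_add distrib_right sum.distrib)
qed

lemma keys_smult_sub: "Poly_Mapping.keys (smult c v) \<subseteq> Poly_Mapping.keys v"
  by (auto simp: in_keys_iff)

lemma lin_ext_smult: "lin_ext f (smult c v) = smult c (lin_ext f v)"
proof (rule poly_mapping_eqI)
  fix b
  have 1: "Poly_Mapping.lookup (lin_ext f (smult c v)) b = (\<Sum>a\<in>Poly_Mapping.keys v. Poly_Mapping.lookup (smult c v) a * Poly_Mapping.lookup (f a) b)"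
    by (rule lookup_lin_ext_sup) (auto simp: in_keys_iff)
  show "Poly_Mapping.lookup (lin_ext f (smult c v)) b = Poly_Mapping.lookup (smult c (lin_ext f v)) b"
    unfolding 1 by (simp add: lookup_lin_ext sum_distrib_left mult.assoc)
qed

lemma lin_ext_bvec[simp]: "lin_ext f (bvec a) = f a"
  by (rule poly_mapping_eqI) (simp add: lookup_lin_ext lookup_bvec)

lemma lin_ext_zero[simp]: "lin_ext f 0 = 0"
  unfolding lin_ext_def by simp

lemma lin_ext_bvec_id: "lin_ext bvec v = v"
proof (rule poly_mapping_eqI)
  fix b
  have e: "(\<lambda>a. Poly_Mapping.lookup v a * (if a = b then 1 else 0)) = (\<lambda>a. if a = b then Poly_Mapping.lookup v b else 0)"
    by auto
  show "Poly_Mapping.lookup (lin_ext bvec v) b = Poly_Mapping.lookup v b"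
    unfolding lookup_lin_ext lookup_bvec e by (simp add: in_keys_iff)
qed

lemma lin_ext_idmap: "lin_ext idmap v = v"
  by (simp add: idmap_def lin_ext_bvec_id)

lemma lin_ext_cong: "(\<And>a. a \<in> Poly_Mapping.keys v \<Longrightarrow> f a = g a) \<Longrightarrow> lin_ext f v = lin_ext g v"
  unfolding lin_ext_def by simp

definition islin :: "(('a \<Rightarrow>\<^sub>0 'k::field) \<Rightarrow> ('b \<Rightarrow>\<^sub>0 'k)) \<Rightarrow> bool" where
  "islin L \<longleftrightarrow> (\<forall>x y. L (x + y) = L x + L y) \<and> (\<forall>c x. L (smult c x) = smult c (L x))"

lemma smult_zero[simp]: "smult 0 v = 0" "smult c 0 = 0"
  by (rule poly_mapping_eqI, simp)+

lemma islin_zero: "islin L \<Longrightarrow> L 0 = 0"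
  unfolding islin_def by (metis smult_zero)

lemma islin_sum: "islin L \<Longrightarrow> L (sum f A) = (\<Sum>a\<in>A. L (f a))"
  by (induction A rule: infinite_finite_induct) (auto simp: islin_zero islin_def)

lemma islin_lin_ext[simp]: "islin (lin_ext f)"
  unfolding islin_def by (simp add: lin_ext_add lin_ext_smult)

lemma islin_basis: assumes "islin L" shows "L v = lin_ext (\<lambda>a. L (bvec a)) v"
proof -
  have "L v = L (lin_ext bvec v)" by (simp only: lin_ext_bvec_id)
  also have "\<dots> = L (\<Sum>a\<in>Poly_Mapping.keys v. smult (Poly_Mapping.lookup v a) (bvec a))"
    by (simp only: lin_ext_def)
  also have "\<dots> = (\<Sum>a\<in>Poly_Mapping.keys v. L (smult (Poly_Mapping.lookup v a) (bvec a)))"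
    by (rule islin_sum[OF assms])
  also have "\<dots> = (\<Sum>a\<in>Poly_Mapping.keys v. smult (Poly_Mapping.lookup v a) (L (bvec a)))"
    using assms unfolding islin_def by simp
  finally show ?thesis by (simp only: lin_ext_def)
qed

lemma islin_eq: assumes "islin F" "islin G" "\<And>a. F (bvec a) = G (bvec a)" shows "F v = G v"
proof -
  have "F v = lin_ext (\<lambda>a. F (bvec a)) v" by (rule islin_basis[OF assms(1)])
  also have "\<dots> = lin_ext (\<lambda>a. G (bvec a)) v" by (simp only: assms(3))
  also have "\<dots> = G v" by (rule islin_basis[OF assms(2), symmetric])
  finally show ?thesis .
qed

lemma islin_comp: "islin F \<Longrightarrow> islin G \<Longrightarrow> islin (\<lambda>x. F (G x))"
  unfolding islin_def by simp

lemma lin_ext_comp: "lin_ext g (lin_ext f v) = lin_ext (\<lambda>a. lin_ext g (f a)) v"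
  by (rule islin_eq[of "\<lambda>v. lin_ext g (lin_ext f v)"], rule islin_comp) (simp_all only: islin_lin_ext lin_ext_bvec)

lemma islin_id: "islin (\<lambda>x. x)" unfolding islin_def by simp

lemma smult_add_left: "smult (a + b) v = smult a v + smult b v"
  by (rule poly_mapping_eqI) (simp add: lookup_add distrib_right)
lemma smult_add_right: "smult a (v + w) = smult a v + smult a w"
  by (rule poly_mapping_eqI) (simp add: lookup_add distrib_left)
lemma smult_smult[simp]: "smult a (smult b v) = smult (a * b) v"
  by (rule poly_mapping_eqI) simp
lemma smult_one[simp]: "smult 1 v = v"
  by (rule poly_mapping_eqI) simp

lemma islin_smult: "islin (smult c)"
  unfolding islin_def by (simp add: smult_add_right mult.commute)

lemma islin_add: "islin F \<Longrightarrow> islin G \<Longrightarrow> islin (\<lambda>x. F x + G x)"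
  unfolding islin_def by (simp add: smult_add_right algebra_simps)

lemma lin_ext_fun_add: "lin_ext (\<lambda>a. f a + g a) v = lin_ext f v + lin_ext g v"
  unfolding lin_ext_def by (simp add: smult_add_right sum.distrib)

lemma lin_ext_fun_smult: "lin_ext (\<lambda>a. smult c (f a)) v = smult c (lin_ext f v)"
  by (rule poly_mapping_eqI) (simp add: lookup_lin_ext sum_distrib_left mult_ac)

lemma lin_ext_fun_L: "islin L \<Longrightarrow> lin_ext (\<lambda>a. L (f a)) v = L (lin_ext f v)"
proof -
  assume L: "islin L"
  have "L (lin_ext f v) = lin_ext (\<lambda>b. L (bvec b)) (lin_ext f v)" by (rule islin_basis[OF L])
  also have "\<dots> = lin_ext (\<lambda>a. lin_ext (\<lambda>b. L (bvec b)) (f a)) v" by (rule lin_ext_comp)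
  also have "\<dots> = lin_ext (\<lambda>a. L (f a)) v" by (intro lin_ext_cong) (rule islin_basis[OF L, symmetric])
  finally show ?thesis by simp
qed

lemma islin_lin_ext_fun: "(\<And>a. islin (L a)) \<Longrightarrow> islin (\<lambda>x. lin_ext (\<lambda>a. L a x) v)"
  unfolding islin_def by (simp add: lin_ext_fun_add lin_ext_fun_smult)

lemma lin_ext_swap: "lin_ext (\<lambda>a. lin_ext (\<lambda>b. F a b) w) v = lin_ext (\<lambda>b. lin_ext (\<lambda>a. F a b) v) w"
  by (rule poly_mapping_eqI) (simp add: lookup_lin_ext sum_distrib_left sum_distrib_right mult_ac sum.swap[of _ "Poly_Mapping.keys v"])

lemma lin_ext_scalar: "lin_ext (\<lambda>a. smult (f a) w) v = smult (lin_form f v) w"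
  unfolding lin_ext_def lin_form_def by (rule poly_mapping_eqI) (simp add: lookup_sum sum_distrib_right)




lemma mult_ite0: "(x::'k::field) * (if P then y else 0) = (if P then x * y else 0)" by simp

lemma tensor_lin: "tensor v w = lin_ext (\<lambda>a. lin_ext (\<lambda>b. bvec (a, b)) w) v"
  by (rule poly_mapping_eqI) (simp add: tensor_def lookup_lin_ext lookup_sum lookup_single lookup_bvec when_def sum_distrib_left mult_ite0 cong: if_cong)

lemma islin_idI: "islin (\<lambda>x. x)" unfolding islin_def by simp

lemma islin_tensor_lI: "islin L \<Longrightarrow> islin (\<lambda>x. tensor (L x) w)"
  unfolding tensor_lin by (rule islin_comp[OF islin_lin_ext])
lemma islin_tensor_rI: "islin L \<Longrightarrow> islin (\<lambda>x. tensor v (L x))"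
  unfolding tensor_lin by (rule islin_comp[where F="\<lambda>w. lin_ext (\<lambda>a. lin_ext (\<lambda>b. bvec (a, b)) w) v"], rule islin_lin_ext_fun) simp_all
lemma islin_lin_extI: "islin L \<Longrightarrow> islin (\<lambda>x. lin_ext f (L x))"
  by (rule islin_comp[OF islin_lin_ext])
lemma islin_mul_lI: "islin L \<Longrightarrow> islin (\<lambda>x. mul m (L x) y)"
  unfolding mul_def by (rule islin_lin_extI, rule islin_tensor_lI)
lemma islin_mul_rI: "islin L \<Longrightarrow> islin (\<lambda>x. mul m y (L x))"
  unfolding mul_def by (rule islin_lin_extI, rule islin_tensor_rI)
lemma islin_smultI: "islin L \<Longrightarrow> islin (\<lambda>x. smult c (L x))"
  by (rule islin_comp[OF islin_smult])
lemma islin_lin_ext_funI: "(\<And>a. islin (L a)) \<Longrightarrow> islin (\<lambda>x. lin_ext (\<lambda>a. L a x) v)"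
  by (rule islin_lin_ext_fun)
lemma islin_addI: "islin F \<Longrightarrow> islin G \<Longrightarrow> islin (\<lambda>x. F x + G x)"
  by (rule islin_add)

lemmas islinI = islin_tensor_lI islin_tensor_rI islin_lin_extI islin_mul_lI islin_mul_rI
   islin_smultI islin_lin_ext_funI islin_addI islin_idI

lemma tensor_bvec[simp]: "tensor (bvec a) (bvec b) = bvec (a, b)"
  unfolding tensor_lin by simp

lemma bilin_eq:
  assumes "\<And>w. islin (\<lambda>v. P v w)" "\<And>v. islin (\<lambda>w. P v w)"
     "\<And>w. islin (\<lambda>v. Q v w)" "\<And>v. islin (\<lambda>w. Q v w)"
     "\<And>a b. P (bvec a) (bvec b) = Q (bvec a) (bvec b)"
  shows "P v w = Q v w"
proof -
  have h: "\<And>a. P (bvec a) w = Q (bvec a) w"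
    by (rule islin_eq[where F="\<lambda>w. P (bvec _) w"]) (use assms in auto)
  show ?thesis by (rule islin_eq[where F="\<lambda>v. P v w"]) (use assms h in auto)
qed

lemma lin_ext_tensor: "lin_ext f (tensor v w) = lin_ext (\<lambda>a. lin_ext (\<lambda>b. f (a, b)) w) v"
  unfolding tensor_lin lin_ext_comp by simp

lemma mul_bvec[simp]: "mul m (bvec a) (bvec b) = m (a, b)"
  unfolding mul_def by simp

lemma mul_expand: "mul m x y = lin_ext (\<lambda>a. lin_ext (\<lambda>b. m (a, b)) y) x"
  unfolding mul_def lin_ext_tensor ..

lemma lin_ext_tensor_bilin:
  assumes "\<And>w. islin (\<lambda>v. B v w)" "\<And>v. islin (\<lambda>w. B v w)"
  shows "lin_ext (\<lambda>(a, b). B (bvec a) (bvec b)) (tensor v w) = B v w"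
  by (rule bilin_eq[where P="\<lambda>v w. lin_ext (\<lambda>(a, b). B (bvec a) (bvec b)) (tensor v w)"])
     (use assms in \<open>auto intro!: islinI\<close>)

lemma tmap_tensor: "lin_ext (tmap f g) (tensor v w) = tensor (lin_ext f v) (lin_ext g w)"
  by (rule bilin_eq[where P="\<lambda>v w. lin_ext (tmap f g) (tensor v w)"]) (auto intro!: islinI simp: tmap_def)

lemma tmult_tensor: "mul (tmult m1 m2) (tensor a b) (tensor c d) = tensor (mul m1 a c) (mul m2 b d)"
proof -
  have h: "mul (tmult m1 m2) (tensor a b) (tensor (bvec x) (bvec y)) = tensor (mul m1 a (bvec x)) (mul m2 b (bvec y))" for x y
  proof (rule bilin_eq[where P="\<lambda>a b. mul (tmult m1 m2) (tensor a b) (tensor (bvec x) (bvec y))"])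
    fix a' b'
    show "mul (tmult m1 m2) (tensor (bvec a') (bvec b')) (tensor (bvec x) (bvec y)) =
      tensor (mul m1 (bvec a') (bvec x)) (mul m2 (bvec b') (bvec y))"
      by (simp add: tmult_def)
  qed (rule islinI, rule islinI, rule islinI)+
  show ?thesis
  proof (rule bilin_eq[where P="\<lambda>c d. mul (tmult m1 m2) (tensor a b) (tensor c d)"])
    fix x y show "mul (tmult m1 m2) (tensor a b) (tensor (bvec x) (bvec y)) =
      tensor (mul m1 a (bvec x)) (mul m2 b (bvec y))" by (rule h)
  qed (rule islinI, rule islinI, rule islinI)+
qed




lemma lin_ext_fun_L2: "islin L \<Longrightarrow> lin_ext (\<lambda>(x, y). L (g x y)) v = L (lin_ext (\<lambda>(x, y). g x y) v)"
proof -
  assume L: "islin L"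
  have "lin_ext (\<lambda>(x, y). L (g x y)) v = lin_ext (\<lambda>a. L ((\<lambda>(x, y). g x y) a)) v"
    by (rule arg_cong[where f="\<lambda>f. lin_ext f v"]) auto
  also have "\<dots> = L (lin_ext (\<lambda>(x, y). g x y) v)" by (rule lin_ext_fun_L[OF L])
  finally show ?thesis .
qed

lemma lin_form_bvec[simp]: "lin_form f (bvec a) = f a"
  unfolding lin_form_def by (simp add: lookup_bvec)

lemma smult_bvec_lin_form: "smult (lin_form f v) w = lin_ext (\<lambda>a. smult (f a) w) v"
  by (rule lin_ext_scalar[symmetric])

lemma mul_smult_l: "mul m (smult c x) y = smult c (mul m x y)"
proof -
  have "islin (\<lambda>x. mul m x y)" by (rule islinI)+
  then show ?thesis unfolding islin_def by blast
qed
lemma mul_smult_r: "mul m x (smult c y) = smult c (mul m x y)"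
proof -
  have "islin (\<lambda>y. mul m x y)" by (rule islinI)+
  then show ?thesis unfolding islin_def by blast
qed
lemma tensor_smult_l: "tensor (smult c x) y = smult c (tensor x y)"
proof -
  have "islin (\<lambda>x. tensor x y)" by (rule islinI)+
  then show ?thesis unfolding islin_def by blast
qed
lemma tensor_smult_r: "tensor x (smult c y) = smult c (tensor x y)"
proof -
  have "islin (\<lambda>y. tensor x y)" by (rule islinI)+
  then show ?thesis unfolding islin_def by blast
qed

lemma lin_ext_tensor_bvec_l: "lin_ext f (tensor (bvec a) w) = lin_ext (\<lambda>b. f (a, b)) w"
  by (simp add: lin_ext_tensor)
lemma lin_ext_tensor_bvec_r: "lin_ext f (tensor v (bvec b)) = lin_ext (\<lambda>a. f (a, b)) v"
  by (simp add: lin_ext_tensor)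

lemma mul_tmult_expand: "lin_ext F (mul (tmult m1 m2) X Y) =
   lin_ext (\<lambda>(a1, a2). lin_ext (\<lambda>(b1, b2). lin_ext F (tensor (m1 (a1, b1)) (m2 (a2, b2)))) Y) X"
  unfolding mul_expand lin_ext_comp
  apply (intro lin_ext_cong)
  apply (clarsimp simp: tmult_def)
  apply (intro lin_ext_cong)
  apply (clarsimp simp: tmult_def)
  done

locale hopf =
  fixes m :: "'a \<times> 'a \<Rightarrow> ('a \<Rightarrow>\<^sub>0 'k::field)" and u :: "'a \<Rightarrow>\<^sub>0 'k"
    and d :: "'a \<Rightarrow> ('a \<times> 'a \<Rightarrow>\<^sub>0 'k)" and e :: "'a \<Rightarrow> 'k" and S :: "'a \<Rightarrow> ('a \<Rightarrow>\<^sub>0 'k)"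
  assumes H: "hopf_algebra m u d e S"
begin

lemma assoc: "mul m (mul m x y) z = mul m x (mul m y z)"
  using H unfolding hopf_algebra_def by blast
lemma unitL[simp]: "mul m u x = x"
  using H unfolding hopf_algebra_def by blast
lemma unitR[simp]: "mul m x u = x"
  using H unfolding hopf_algebra_def by blast
lemma coassoc: "reassoc (lin_ext (tmap d idmap) (d a)) = lin_ext (tmap idmap d) (d a)"
  using H unfolding hopf_algebra_def by blast
lemma counitL0: "lin_ext (\<lambda>(x, y). smult (e x) (bvec y)) (d a) = bvec a"
  using H unfolding hopf_algebra_def by blast
lemma counitR0: "lin_ext (\<lambda>(x, y). smult (e y) (bvec x)) (d a) = bvec a"
  using H unfolding hopf_algebra_def by blast
lemma D_mult: "lin_ext d (mul m x y) = mul (tmult m m) (lin_ext d x) (lin_ext d y)"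
  using H unfolding hopf_algebra_def by blast
lemma D_unit: "lin_ext d u = tensor u u"
  using H unfolding hopf_algebra_def by blast
lemma eps_mult: "lin_form e (mul m x y) = lin_form e x * lin_form e y"
  using H unfolding hopf_algebra_def by blast
lemma eps_unit: "lin_form e u = 1"
  using H unfolding hopf_algebra_def by blast
lemma antiL0: "lin_ext (\<lambda>(x, y). mul m (S x) (bvec y)) (d a) = smult (e a) u"
  using H unfolding hopf_algebra_def by blast
lemma antiR0: "lin_ext (\<lambda>(x, y). mul m (bvec x) (S y)) (d a) = smult (e a) u"
  using H unfolding hopf_algebra_def by blast

lemma counitL: "lin_ext (\<lambda>(x, y). smult (e x) (f y)) (d a) = f a"
proof -
  have "lin_ext (\<lambda>(x, y). smult (e x) (f y)) (d a) = lin_ext (\<lambda>(x, y). lin_ext f (smult (e x) (bvec y))) (d a)"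
    by (simp add: lin_ext_smult)
  also have "\<dots> = lin_ext f (lin_ext (\<lambda>(x, y). smult (e x) (bvec y)) (d a))"
    by (rule lin_ext_fun_L2) simp
  finally show ?thesis by (simp add: counitL0)
qed

lemma counitR: "lin_ext (\<lambda>(x, y). smult (e y) (f x)) (d a) = f a"
proof -
  have "lin_ext (\<lambda>(x, y). smult (e y) (f x)) (d a) = lin_ext (\<lambda>(x, y). lin_ext f (smult (e y) (bvec x))) (d a)"
    by (simp add: lin_ext_smult)
  also have "\<dots> = lin_ext f (lin_ext (\<lambda>(x, y). smult (e y) (bvec x)) (d a))"
    by (rule lin_ext_fun_L2) simp
  finally show ?thesis by (simp add: counitR0)
qed

lemma eps_bvec_mul: "lin_form e (m (a, b)) = e a * e b"
  using eps_mult[of "bvec a" "bvec b"] by (simp add: mul_bvec)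

lemma antiL_vec: "lin_ext (\<lambda>(x, y). mul m (S x) (bvec y)) (lin_ext d g) = smult (lin_form e g) u"
  by (simp add: lin_ext_comp antiL0 lin_ext_scalar)
lemma antiR_vec: "lin_ext (\<lambda>(x, y). mul m (bvec x) (S y)) (lin_ext d g) = smult (lin_form e g) u"
  by (simp add: lin_ext_comp antiR0 lin_ext_scalar)

lemma antiL_gen: "lin_ext (\<lambda>(x, y). mul m (mul m A (S x)) (mul m (bvec y) B)) (d c) = smult (e c) (mul m A B)"
proof -
  have "lin_ext (\<lambda>(x, y). mul m (mul m A (S x)) (mul m (bvec y) B)) (d c)
      = lin_ext (\<lambda>(x, y). mul m A (mul m (mul m (S x) (bvec y)) B)) (d c)"
    by (simp add: assoc)
  also have "\<dots> = mul m A (mul m (lin_ext (\<lambda>(x, y). mul m (S x) (bvec y)) (d c)) B)"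
    by (rule lin_ext_fun_L2) (rule islinI)+
  finally show ?thesis by (simp add: antiL0 mul_smult_l mul_smult_r)
qed

lemma antiR_gen: "lin_ext (\<lambda>(x, y). mul m (mul m A (bvec x)) (mul m (S y) B)) (d c) = smult (e c) (mul m A B)"
proof -
  have "lin_ext (\<lambda>(x, y). mul m (mul m A (bvec x)) (mul m (S y) B)) (d c)
      = lin_ext (\<lambda>(x, y). mul m A (mul m (mul m (bvec x) (S y)) B)) (d c)"
    by (simp add: assoc)
  also have "\<dots> = mul m A (mul m (lin_ext (\<lambda>(x, y). mul m (bvec x) (S y)) (d c)) B)"
    by (rule lin_ext_fun_L2) (rule islinI)+
  finally show ?thesis by (simp add: antiR0 mul_smult_l mul_smult_r)
qed

end



lemma lin_ext_swap2: "lin_ext (\<lambda>(a1, a2). lin_ext (\<lambda>(b1, b2). F a1 a2 b1 b2) w) v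
   = lin_ext (\<lambda>(b1, b2). lin_ext (\<lambda>(a1, a2). F a1 a2 b1 b2) v) w"
proof -
  have e1: "(\<lambda>(a1, a2). lin_ext (\<lambda>(b1, b2). F a1 a2 b1 b2) w) = (\<lambda>a. lin_ext (\<lambda>b. F (fst a) (snd a) (fst b) (snd b)) w)"
    by (simp add: split_def)
  have e2: "(\<lambda>(b1, b2). lin_ext (\<lambda>(a1, a2). F a1 a2 b1 b2) v) = (\<lambda>b. lin_ext (\<lambda>a. F (fst a) (snd a) (fst b) (snd b)) v)"
    by (simp add: split_def)
  show ?thesis unfolding e1 e2 by (rule lin_ext_swap)
qed

context hopf begin

lemma D2_exp2: "lin_ext g (lin_ext (tmap idmap d) (d a)) = lin_ext (\<lambda>(x, y). lin_ext (\<lambda>c. g (x, c)) (d y)) (d a)"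
  unfolding lin_ext_comp
  by (intro lin_ext_cong) (clarsimp simp: tmap_def idmap_def lin_ext_tensor_bvec_l)

lemma reassoc_exp: "lin_ext g (reassoc W) = lin_ext (\<lambda>((p, q), r). g (p, q, r)) W"
  unfolding reassoc_def lin_ext_comp
  by (intro lin_ext_cong) auto

lemma D2_exp1: "lin_ext g (lin_ext (tmap idmap d) (d a)) = lin_ext (\<lambda>(x, y). lin_ext (\<lambda>(p, q). g (p, q, y)) (d x)) (d a)"
  unfolding coassoc[symmetric] reassoc_exp lin_ext_comp
  apply (intro lin_ext_cong)
  apply (clarsimp simp: tmap_def idmap_def lin_ext_tensor_bvec_r)
  apply (intro lin_ext_cong)
  apply (auto split: prod.splits)
  done

definition Th where "Th a1 a2 a3 b1 b2 b3 = mul m (mul m (lin_ext S (m (a1, b1))) (m (a2, b2))) (mul m (S b3) (S a3))"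

lemma Phi_tensor: "lin_ext (\<lambda>(p, q). mul m (S p) (bvec q)) (tensor v w) = mul m (lin_ext S v) w"
proof -
  have "lin_ext (\<lambda>(p, q). mul m (lin_ext S (bvec p)) (bvec q)) (tensor v w) = mul m (lin_ext S v) w"
    by (rule lin_ext_tensor_bilin[where B="\<lambda>v w. mul m (lin_ext S v) w"]) (rule islinI)+
  then show ?thesis by simp
qed

lemma key1: "lin_ext (\<lambda>(a1, a2). lin_ext (\<lambda>(b1, b2). Th a1 a2 a3 b1 b2 b3) (d y)) (d x)
   = smult (e x * e y) (mul m (S b3) (S a3))"
proof -
  let ?C = "mul m (S b3) (S a3)"
  have "lin_ext (\<lambda>(a1, a2). lin_ext (\<lambda>(b1, b2). Th a1 a2 a3 b1 b2 b3) (d y)) (d x)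
     = lin_ext (\<lambda>(a1, a2). mul m (lin_ext (\<lambda>(b1, b2). mul m (lin_ext S (m (a1, b1))) (m (a2, b2))) (d y)) ?C) (d x)"
    unfolding Th_def by (subst lin_ext_fun_L2[where L="\<lambda>z. mul m z ?C"], (rule islinI)+) (rule refl)
  also have "\<dots> = mul m (lin_ext (\<lambda>(a1, a2). lin_ext (\<lambda>(b1, b2). mul m (lin_ext S (m (a1, b1))) (m (a2, b2))) (d y)) (d x)) ?C"
    by (rule lin_ext_fun_L2) (rule islinI)+
  also have "lin_ext (\<lambda>(a1, a2). lin_ext (\<lambda>(b1, b2). mul m (lin_ext S (m (a1, b1))) (m (a2, b2))) (d y)) (d x)
     = lin_ext (\<lambda>(p, q). mul m (S p) (bvec q)) (mul (tmult m m) (d x) (d y))"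
    unfolding mul_tmult_expand Phi_tensor ..
  also have "\<dots> = smult (e x * e y) u"
    using D_mult[of "bvec x" "bvec y"] antiL_vec[of "m (x, y)"] by (simp add: eps_bvec_mul)
  finally show ?thesis by (simp add: mul_smult_l)
qed

lemma way1: "lin_ext (\<lambda>(a1, a2, a3). lin_ext (\<lambda>(b1, b2, b3). Th a1 a2 a3 b1 b2 b3) (lin_ext (tmap idmap d) (d b))) (lin_ext (tmap idmap d) (d a))
   = mul m (S b) (S a)"
proof -
  have "lin_ext (\<lambda>(a1, a2, a3). lin_ext (\<lambda>(b1, b2, b3). Th a1 a2 a3 b1 b2 b3) (lin_ext (tmap idmap d) (d b))) (lin_ext (tmap idmap d) (d a))
    = lin_ext (\<lambda>(x, a3). lin_ext (\<lambda>(a1, a2). lin_ext (\<lambda>(y, b3). lin_ext (\<lambda>(b1, b2). Th a1 a2 a3 b1 b2 b3) (d y)) (d b)) (d x)) (d a)"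
    unfolding D2_exp1 case_prod_conv by (rule refl)
  also have "\<dots> = lin_ext (\<lambda>(x, a3). lin_ext (\<lambda>(y, b3). lin_ext (\<lambda>(a1, a2). lin_ext (\<lambda>(b1, b2). Th a1 a2 a3 b1 b2 b3) (d y)) (d x)) (d b)) (d a)"
    by (intro lin_ext_cong) (clarsimp, rule lin_ext_swap2)
  also have "\<dots> = lin_ext (\<lambda>(x, a3). lin_ext (\<lambda>(y, b3). smult (e x) (smult (e y) (mul m (S b3) (S a3)))) (d b)) (d a)"
    by (simp only: key1 smult_smult)
  also have "\<dots> = lin_ext (\<lambda>(x, a3). smult (e x) (lin_ext (\<lambda>(y, b3). smult (e y) (mul m (S b3) (S a3))) (d b))) (d a)"
    by (subst lin_ext_fun_L2[where L="smult _"], rule islin_smult) (rule refl)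
  also have "\<dots> = mul m (S b) (S a)"
    by (simp only: counitL)
  finally show ?thesis .
qed

lemma antiR_gen2: "lin_ext (\<lambda>(x, y). mul m (mul m A (bvec x)) (S y)) (d c) = smult (e c) A"
  using antiR_gen[of A u c] by simp

lemma Th_eq2: "Th a1 a2 a3 b1 b2 b3 = mul m (mul m (mul m (lin_ext S (m (a1, b1))) (bvec a2)) (bvec b2)) (mul m (S b3) (S a3))"
  unfolding Th_def mul_bvec[symmetric] assoc ..

lemma way2: "lin_ext (\<lambda>(a1, a2, a3). lin_ext (\<lambda>(b1, b2, b3). Th a1 a2 a3 b1 b2 b3) (lin_ext (tmap idmap d) (d b))) (lin_ext (tmap idmap d) (d a))
   = lin_ext S (m (a, b))"
proof -
  have "lin_ext (\<lambda>(a1, a2, a3). lin_ext (\<lambda>(b1, b2, b3). Th a1 a2 a3 b1 b2 b3) (lin_ext (tmap idmap d) (d b))) (lin_ext (tmap idmap d) (d a))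
    = lin_ext (\<lambda>(a1, y). lin_ext (\<lambda>(a2, a3). lin_ext (\<lambda>(b1, y'). lin_ext (\<lambda>(b2, b3). Th a1 a2 a3 b1 b2 b3) (d y')) (d b)) (d y)) (d a)"
    unfolding D2_exp2 case_prod_conv by (rule refl)
  also have "\<dots> = lin_ext (\<lambda>(a1, y). lin_ext (\<lambda>(a2, a3). lin_ext (\<lambda>(b1, y'). smult (e y') (mul m (mul m (lin_ext S (m (a1, b1))) (bvec a2)) (S a3))) (d b)) (d y)) (d a)"
    by (simp only: Th_eq2 antiR_gen)
  also have "\<dots> = lin_ext (\<lambda>(a1, y). lin_ext (\<lambda>(a2, a3). mul m (mul m (lin_ext S (m (a1, b))) (bvec a2)) (S a3)) (d y)) (d a)"
    by (simp only: counitR)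
  also have "\<dots> = lin_ext (\<lambda>(a1, y). smult (e y) (lin_ext S (m (a1, b)))) (d a)"
    by (simp only: antiR_gen2)
  also have "\<dots> = lin_ext S (m (a, b))"
    by (simp only: counitR)
  finally show ?thesis .
qed

lemma S_anti_basis: "lin_ext S (m (a, b)) = mul m (S b) (S a)"
  using way1[of b a] way2[of b a] by simp

lemma S_anti: "lin_ext S (mul m x y) = mul m (lin_ext S y) (lin_ext S x)"
  by (rule bilin_eq[where P="\<lambda>x y. lin_ext S (mul m x y)"]) ((rule islinI)+, simp add: S_anti_basis)

lemma S_unit: "lin_ext S u = u"
proof -
  have "lin_ext (\<lambda>(x, y). mul m (S x) (bvec y)) (lin_ext d u) = smult (lin_form e u) u" by (rule antiL_vec)
  then show ?thesis by (simp add: D_unit Phi_tensor eps_unit)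
qed

end



definition eid :: "('a \<Rightarrow> 'k::field) \<Rightarrow> ('a \<times> 'b \<Rightarrow>\<^sub>0 'k) \<Rightarrow> ('b \<Rightarrow>\<^sub>0 'k)" where
  "eid e X = lin_ext (\<lambda>(a, b). smult (e a) (bvec b)) X"

lemma eid_tensor: "eid e (tensor v w) = smult (lin_form e v) w"
proof -
  have "eid e (tensor v w) = lin_ext (\<lambda>a. smult (e a) (lin_ext bvec w)) v"
    unfolding eid_def lin_ext_tensor by (simp add: lin_ext_fun_smult)
  then show ?thesis by (simp add: lin_ext_bvec_id lin_ext_scalar)
qed

lemma eid_lin_ext: "eid e (lin_ext f R) = lin_ext (\<lambda>a. eid e (f a)) R"
  unfolding eid_def by (rule lin_ext_comp)

lemma islin_eid: "islin (eid e)" unfolding eid_def by simp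

lemma tmult_bvec: "mul (tmult m1 m2) (bvec (a, b)) (bvec (c, d)) = tensor (m1 (a, c)) (m2 (b, d))"
  by (simp add: tmult_def)

context hopf begin

lemma eid_mult: "eid e (mul (tmult m M) X Y) = mul M (eid e X) (eid e Y)"
proof (rule bilin_eq[where P="\<lambda>X Y. eid e (mul (tmult m M) X Y)"])
  fix a b :: "'a \<times> 'b"
  obtain a1 a2 where a: "a = (a1, a2)" by (cases a)
  obtain b1 b2 where b: "b = (b1, b2)" by (cases b)
  show "eid e (mul (tmult m M) (bvec a) (bvec b)) = mul M (eid e (bvec a)) (eid e (bvec b))"
    unfolding a b tmult_bvec eid_tensor by (simp add: eid_def eps_bvec_mul mul_smult_l mul_smult_r mult_ac)
qed (unfold eid_def, (rule islinI)+)

lemma tmult_assoc_tensor: "mul (tmult m m) (mul (tmult m m) (tensor a1 a2) (tensor b1 b2)) (tensor c1 c2)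
   = mul (tmult m m) (tensor a1 a2) (mul (tmult m m) (tensor b1 b2) (tensor c1 c2))"
  by (simp add: tmult_tensor assoc)

lemma tmult_assoc: "mul (tmult m m) (mul (tmult m m) X Y) Z = mul (tmult m m) X (mul (tmult m m) Y Z)"
proof -
  have bt: "\<And>a. bvec a = tensor (bvec (fst a)) (bvec (snd a))" by simp
  have h1: "mul (tmult m m) (mul (tmult m m) (bvec a) (bvec b)) (bvec c) = mul (tmult m m) (bvec a) (mul (tmult m m) (bvec b) (bvec c))" for a b c
    by (subst (1 2 3 4 5 6) bt) (rule tmult_assoc_tensor)
  have h2: "mul (tmult m m) (mul (tmult m m) (bvec a) (bvec b)) Z = mul (tmult m m) (bvec a) (mul (tmult m m) (bvec b) Z)" for a b
    by (rule islin_eq[where F="\<lambda>Z. mul (tmult m m) (mul (tmult m m) (bvec a) (bvec b)) Z"]) ((rule islinI)+, rule h1)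
  have h3: "mul (tmult m m) (mul (tmult m m) (bvec a) Y) Z = mul (tmult m m) (bvec a) (mul (tmult m m) Y Z)" for a
    by (rule islin_eq[where F="\<lambda>Y. mul (tmult m m) (mul (tmult m m) (bvec a) Y) Z"]) ((rule islinI)+, rule h2)
  show ?thesis
    by (rule islin_eq[where F="\<lambda>X. mul (tmult m m) (mul (tmult m m) X Y) Z"]) ((rule islinI)+, rule h3)
qed

lemma Dl_exp: "lin_ext G (lin_ext (tmap d idmap) R) = lin_ext (\<lambda>(x, y). lin_ext (\<lambda>a. G (a, y)) (d x)) R"
  unfolding lin_ext_comp
  by (intro lin_ext_cong) (clarsimp simp: tmap_def idmap_def lin_ext_tensor_bvec_r)

lemma eid_reassoc: "eid e (reassoc (lin_ext (tmap d idmap) R)) = R"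
proof -
  have "eid e (reassoc (lin_ext (tmap d idmap) R)) = lin_ext (\<lambda>((p, q), r). smult (e p) (bvec (q, r))) (lin_ext (tmap d idmap) R)"
    unfolding eid_def reassoc_exp by simp
  also have "\<dots> = lin_ext (\<lambda>(x, y). lin_ext (\<lambda>(p, q). smult (e p) (bvec (q, y))) (d x)) R"
    unfolding Dl_exp by (simp add: split_def)
  also have "\<dots> = lin_ext (\<lambda>(x, y). bvec (x, y)) R"
    by (simp only: counitL)
  also have "(\<lambda>(x, y). bvec (x, y)) = bvec" by auto
  finally show ?thesis by (simp add: lin_ext_bvec_id)
qed

lemma eid_leg13: "eid e (leg13 u R) = tensor u (eid e R)"
proof -
  have "eid e (leg13 u R) = lin_ext (\<lambda>(a, b). tensor u (smult (e a) (bvec b))) R"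
    unfolding leg13_def eid_lin_ext
    by (intro lin_ext_cong) (clarsimp simp: eid_tensor tensor_smult_r)
  also have "\<dots> = tensor u (eid e R)"
    unfolding eid_def by (rule lin_ext_fun_L2) (rule islinI)+
  finally show ?thesis .
qed

lemma eid_leg23: "eid e (leg23 u R) = R"
  unfolding leg23_def eid_tensor eps_unit by simp

lemma eid_tensor_uu: "eid e (tensor u u) = u"
  by (simp add: eid_tensor eps_unit)

end

locale qtk = hopf m u d e S for m :: "'a \<times> 'a \<Rightarrow> ('a \<Rightarrow>\<^sub>0 'k::field)" and u d e S +
  fixes R Rinv :: "'a \<times> 'a \<Rightarrow>\<^sub>0 'k"
    and mK :: "'c \<times> 'c \<Rightarrow> ('c \<Rightarrow>\<^sub>0 'k)" and uK :: "'c \<Rightarrow>\<^sub>0 'k" and p :: "'a \<Rightarrow> ('c \<Rightarrow>\<^sub>0 'k)"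
  assumes RRinv: "mul (tmult m m) R Rinv = tensor u u"
    and RinvR: "mul (tmult m m) Rinv R = tensor u u"
    and QT: "reassoc (lin_ext (tmap d idmap) R) = mul (tmult m (tmult m m)) (leg13 u R) (leg23 u R)"
    and assocK: "\<And>x y z. mul mK (mul mK x y) z = mul mK x (mul mK y z)"
    and unitLK[simp]: "\<And>x. mul mK uK x = x"
    and unitRK[simp]: "\<And>x. mul mK x uK = x"
    and pmult: "\<And>x y. lin_ext p (mul m x y) = mul mK (lin_ext p x) (lin_ext p y)"
    and punit: "lin_ext p u = uK"
begin

lemma eidR: "eid e R = u"
proof -
  let ?T = "tmult m m" and ?x = "eid e R"
  have 1: "R = mul ?T (tensor u ?x) R"
    using arg_cong[OF QT, of "eid e"] by (simp only: eid_reassoc eid_mult eid_leg13 eid_leg23)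
  have "tensor u u = mul ?T (mul ?T (tensor u ?x) R) Rinv" using RRinv 1 by simp
  also have "\<dots> = tensor u ?x" by (simp only: tmult_assoc RRinv tmult_tensor unitL unitR)
  finally have "tensor u u = tensor u ?x" .
  then have "eid e (tensor u u) = eid e (tensor u ?x)" by simp
  then show ?thesis by (simp add: eid_tensor eps_unit)
qed

lemma eidRinv: "eid e Rinv = u"
proof -
  have "eid e (mul (tmult m m) Rinv R) = u" by (simp add: RinvR eid_tensor_uu)
  then show ?thesis by (simp add: eid_mult eidR)
qed

end



lemma islin_lin_ext_fun2I: "(\<And>a b. islin (L a b)) \<Longrightarrow> islin (\<lambda>x. lin_ext (\<lambda>(a, b). L a b x) v)"
proof -
  assume h: "\<And>a b. islin (L a b)"
  have "islin (\<lambda>x. lin_ext (\<lambda>c. L (fst c) (snd c) x) v)" by (rule islin_lin_ext_fun) (rule h)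
  then show ?thesis by (simp add: split_def)
qed

context qtk begin

definition Av :: "('a \<Rightarrow>\<^sub>0 'k) \<Rightarrow> ('c \<Rightarrow>\<^sub>0 'k) \<Rightarrow> ('c \<Rightarrow>\<^sub>0 'k)" where
  "Av g k = lin_ext (\<lambda>(g1, g2). mul mK (mul mK (p g1) k) (lin_ext p (S g2))) (lin_ext d g)"

lemma islin_Av_k: "islin (\<lambda>k. Av g k)"
  unfolding Av_def by (rule islin_lin_ext_fun2I) (rule islinI)+

lemma islin_Av_g: "islin (\<lambda>g. Av g k)"
  unfolding Av_def by (rule islinI)+

lemma pi_m: "lin_ext p (m (a, b)) = mul mK (p a) (p b)"
  using pmult[of "bvec a" "bvec b"] by simp

lemma Psi_tensor: "lin_ext (\<lambda>(g1, g2). mul mK (mul mK (p g1) k) (lin_ext p (S g2))) (tensor v w)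
   = mul mK (mul mK (lin_ext p v) k) (lin_ext p (lin_ext S w))"
proof -
  have "lin_ext (\<lambda>(g1, g2). mul mK (mul mK (lin_ext p (bvec g1)) k) (lin_ext p (lin_ext S (bvec g2)))) (tensor v w)
   = mul mK (mul mK (lin_ext p v) k) (lin_ext p (lin_ext S w))"
    by (rule lin_ext_tensor_bilin[where B="\<lambda>v w. mul mK (mul mK (lin_ext p v) k) (lin_ext p (lin_ext S w))"]) (rule islinI)+
  then show ?thesis by simp
qed

lemma Av_mult: "Av (mul m g h) k = Av g (Av h k)"
proof -
  have l: "Av (mul m g h) k = lin_ext (\<lambda>(x1, x2). lin_ext (\<lambda>(y1, y2). mul mK (p x1) (mul mK (p y1) (mul mK k (mul mK (lin_ext p (S y2)) (lin_ext p (S x2)))))) (lin_ext d h)) (lin_ext d g)"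
    unfolding Av_def D_mult mul_tmult_expand Psi_tensor
    unfolding S_anti_basis pmult pi_m assocK ..
  have i: "mul mK (mul mK (p x1) (Av h k)) (lin_ext p (S x2)) =
     lin_ext (\<lambda>(y1, y2). mul mK (p x1) (mul mK (p y1) (mul mK k (mul mK (lin_ext p (S y2)) (lin_ext p (S x2)))))) (lin_ext d h)" for x1 x2
  proof -
    have "mul mK (mul mK (p x1) (Av h k)) (lin_ext p (S x2)) =
      lin_ext (\<lambda>(y1, y2). mul mK (mul mK (p x1) (mul mK (mul mK (p y1) k) (lin_ext p (S y2))))  (lin_ext p (S x2))) (lin_ext d h)"
      unfolding Av_def by (rule lin_ext_fun_L2[symmetric]) (rule islinI)+
    then show ?thesis by (simp only: assocK)
  qed
  show ?thesis unfolding l Av_def[of g "Av h k"] i ..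
qed

lemma Av_m: "Av (m (a, b)) k = Av (bvec a) (Av (bvec b) k)"
  using Av_mult[of "bvec a" "bvec b" k] by simp

lemma Av_unit: "Av u k = k"
  unfolding Av_def D_unit Psi_tensor punit S_unit by simp

lemma Av_counit: "Av (bvec g) uK = smult (e g) uK"
proof -
  have "Av (bvec g) uK = lin_ext (\<lambda>(x, y). lin_ext p (mul m (bvec x) (S y))) (d g)"
    unfolding Av_def by (simp add: pmult)
  also have "\<dots> = lin_ext p (lin_ext (\<lambda>(x, y). mul m (bvec x) (S y)) (d g))"
    by (rule lin_ext_fun_L2) simp
  finally show ?thesis by (simp add: antiR0 lin_ext_smult punit)
qed

lemma pi_ad: "lin_ext p (ad m d S h a) = Av h (lin_ext p a)"
proof -
  have "lin_ext p (ad m d S h a) = lin_ext (\<lambda>(x, y). lin_ext p (mul m (mul m (bvec x) a) (S y))) (lin_ext d h)"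
    unfolding ad_def by (simp add: lin_ext_fun_L2[where L="lin_ext p"])
  then show ?thesis unfolding Av_def by (simp add: pmult)
qed

definition G where "G r1 r2 Z = lin_ext (\<lambda>(x, c). tensor (mul m (bvec x) (S r2)) (Av (bvec r1) (bvec c))) Z"
definition T where "T Q Z = lin_ext (\<lambda>(r1, r2). G r1 r2 Z) Q"

lemma G_tensor: "G r1 r2 (tensor v w) = tensor (mul m v (S r2)) (Av (bvec r1) w)"
  unfolding G_def
  by (rule lin_ext_tensor_bilin[where B="\<lambda>v w. tensor (mul m v (S r2)) (Av (bvec r1) w)"])
     (rule islinI islin_Av_k)+

lemma islin_T: "islin (T Q)"
  unfolding T_def G_def by (rule islin_lin_ext_fun2I) simp

lemma T_tensor: "T Q (tensor v w) = lin_ext (\<lambda>(r1, r2). tensor (mul m v (S r2)) (Av (bvec r1) w)) Q"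
  unfolding T_def G_tensor ..

lemma T_eps: assumes "eid e Q = u" shows "T Q (tensor a uK) = tensor a uK"
proof -
  have "T Q (tensor a uK) = lin_ext (\<lambda>(r1, r2). tensor (mul m a (lin_ext S (smult (e r1) (bvec r2)))) uK) Q"
    unfolding T_tensor Av_counit
    by (simp add: lin_ext_smult mul_smult_r tensor_smult_r tensor_smult_l)
  also have "\<dots> = tensor (mul m a (lin_ext S (eid e Q))) uK"
    unfolding eid_def by (rule lin_ext_fun_L2) (rule islinI)+
  finally show ?thesis by (simp add: assms S_unit)
qed

lemma Phi_tensor2: "lin_ext (\<lambda>(g, h). tensor (mul m (bvec x) (S h)) (Av (bvec g) (bvec c))) (tensor v w)
   = tensor (mul m (bvec x) (lin_ext S w)) (Av v (bvec c))"
proof -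
  have "lin_ext (\<lambda>(g, h). tensor (mul m (bvec x) (lin_ext S (bvec h))) (Av (bvec g) (bvec c))) (tensor v w)
   = tensor (mul m (bvec x) (lin_ext S w)) (Av v (bvec c))"
    by (rule lin_ext_tensor_bilin[where B="\<lambda>v w. tensor (mul m (bvec x) (lin_ext S w)) (Av v (bvec c))"])
       (rule islinI islin_Av_g)+
  then show ?thesis by simp
qed

lemma T_comp: assumes "mul (tmult m m) Q1 Q2 = tensor u u" shows "T Q1 (T Q2 Z) = Z"
proof (rule islin_eq[where F="\<lambda>Z. T Q1 (T Q2 Z)" and G="\<lambda>Z. Z"])
  show "islin (\<lambda>Z. T Q1 (T Q2 Z))" by (rule islin_comp[OF islin_T islin_T])
  show "islin (\<lambda>Z. Z)" by (rule islin_idI)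
  fix z :: "'a \<times> 'c"
  obtain x c where z: "z = (x, c)" by (cases z)
  let ?Phi = "lin_ext (\<lambda>(g, h). tensor (mul m (bvec x) (S h)) (Av (bvec g) (bvec c)))"
  have "T Q1 (T Q2 (bvec z)) = T Q1 (lin_ext (\<lambda>(r1, r2). tensor (mul m (bvec x) (S r2)) (Av (bvec r1) (bvec c))) Q2)"
    unfolding z T_def G_def by simp
  also have "\<dots> = lin_ext (\<lambda>(r1, r2). T Q1 (tensor (mul m (bvec x) (S r2)) (Av (bvec r1) (bvec c)))) Q2"
    by (rule lin_ext_fun_L2[symmetric]) (rule islin_T)
  also have "\<dots> = lin_ext (\<lambda>(r1, r2). lin_ext (\<lambda>(s1, s2). tensor (mul m (bvec x) (mul m (S r2) (S s2))) (Av (bvec s1) (Av (bvec r1) (bvec c)))) Q1) Q2"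
    unfolding T_tensor assoc ..
  also have "\<dots> = lin_ext (\<lambda>(s1, s2). lin_ext (\<lambda>(r1, r2). tensor (mul m (bvec x) (mul m (S r2) (S s2))) (Av (bvec s1) (Av (bvec r1) (bvec c)))) Q2) Q1"
    by (rule lin_ext_swap2)
  also have "\<dots> = ?Phi (mul (tmult m m) Q1 Q2)"
    unfolding mul_tmult_expand Phi_tensor2 S_anti_basis Av_m ..
  also have "\<dots> = bvec z"
    unfolding assms Phi_tensor2 z by (simp add: S_unit Av_unit)
  finally show "T Q1 (T Q2 (bvec z)) = bvec z" .
qed

lemma link: "lin_ext (tmap idmap p) (transmuted_comult m d S R h) = T R (lin_ext (tmap idmap p) (lin_ext d h))"
proof -
  have "lin_ext (tmap idmap p) (transmuted_comult m d S R h)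
    = lin_ext (\<lambda>(r1, r2). lin_ext (\<lambda>(x, y). tensor (mul m (bvec x) (S r2)) (Av (bvec r1) (p y))) (lin_ext d h)) R"
    unfolding transmuted_comult_def lin_ext_comp
    apply (intro lin_ext_cong)
    apply (clarsimp simp: lin_ext_comp)
    apply (intro lin_ext_cong)
    apply (clarsimp simp: tmap_tensor lin_ext_idmap pi_ad)
    done
  also have "\<dots> = T R (lin_ext (tmap idmap p) (lin_ext d h))"
    unfolding T_def
    apply (intro lin_ext_cong)
    apply (clarsimp simp: G_def lin_ext_comp)
    apply (intro lin_ext_cong)
    apply (clarsimp simp: tmap_def idmap_def G_def[symmetric] G_tensor)
    done
  finally show ?thesis .
qed

lemma main: "(lin_ext (tmap idmap p) (transmuted_comult m d S R h) = tensor h uK)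
   \<longleftrightarrow> (lin_ext (tmap idmap p) (lin_ext d h) = tensor h uK)"
proof
  assume a: "lin_ext (tmap idmap p) (transmuted_comult m d S R h) = tensor h uK"
  have "lin_ext (tmap idmap p) (lin_ext d h) = T Rinv (T R (lin_ext (tmap idmap p) (lin_ext d h)))"
    by (rule T_comp[OF RinvR, symmetric])
  also have "\<dots> = tensor h uK" using a by (simp add: link[symmetric] T_eps eidRinv)
  finally show "lin_ext (tmap idmap p) (lin_ext d h) = tensor h uK" .
next
  assume a: "lin_ext (tmap idmap p) (lin_ext d h) = tensor h uK"
  show "lin_ext (tmap idmap p) (transmuted_comult m d S R h) = tensor h uK"
    by (simp add: link a T_eps eidR)
qed

end


theorem mainTheorem2:
  fixes m :: "'a \<times> 'a \<Rightarrow> ('a \<Rightarrow>\<^sub>0 'k::field)" and u :: "'a \<Rightarrow>\<^sub>0 'k"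
    and d :: "'a \<Rightarrow> ('a \<times> 'a \<Rightarrow>\<^sub>0 'k)" and e :: "'a \<Rightarrow> 'k" and S :: "'a \<Rightarrow> ('a \<Rightarrow>\<^sub>0 'k)"
    and R :: "'a \<times> 'a \<Rightarrow>\<^sub>0 'k"
    and mK :: "'c \<times> 'c \<Rightarrow> ('c \<Rightarrow>\<^sub>0 'k)" and uK :: "'c \<Rightarrow>\<^sub>0 'k"
    and dK :: "'c \<Rightarrow> ('c \<times> 'c \<Rightarrow>\<^sub>0 'k)" and eK :: "'c \<Rightarrow> 'k" and SK :: "'c \<Rightarrow> ('c \<Rightarrow>\<^sub>0 'k)"
    and p :: "'a \<Rightarrow> ('c \<Rightarrow>\<^sub>0 'k)"
  assumes "quasitriangular m u d e S R"
    and "hopf_algebra mK uK dK eK SK"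
    and "hopf_map m u d e mK uK dK eK p"
    and "\<forall>y. \<exists>x. lin_ext p x = y"
  shows "{h. lin_ext (tmap idmap p) (transmuted_comult m d S R h) = tensor h uK}
       = {h. lin_ext (tmap idmap p) (lin_ext d h) = tensor h uK}"
proof -
  have H: "hopf_algebra m u d e S" using assms(1) unfolding quasitriangular_def by blast
  obtain Rinv where R1: "mul (tmult m m) R Rinv = tensor u u" and R2: "mul (tmult m m) Rinv R = tensor u u"
    using assms(1) unfolding quasitriangular_def by blast
  have QT: "reassoc (lin_ext (tmap d idmap) R) = mul (tmult m (tmult m m)) (leg13 u R) (leg23 u R)"
    using assms(1) unfolding quasitriangular_def by blast
  have K1: "\<And>x y z. mul mK (mul mK x y) z = mul mK x (mul mK y z)"
    and K2: "\<And>x. mul mK uK x = x" and K3: "\<And>x. mul mK x uK = x"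
    using assms(2) unfolding hopf_algebra_def by blast+
  have P1: "\<And>x y. lin_ext p (mul m x y) = mul mK (lin_ext p x) (lin_ext p y)"
    and P2: "lin_ext p u = uK"
    using assms(3) unfolding hopf_map_def by blast+
  interpret qtk m u d e S R Rinv mK uK p
    by (unfold_locales) (rule H R1 R2 QT K1 K2 K3 P1 P2)+
  show ?thesis using main by blast
qed

end
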